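(* Let $k\ge2$, $d=4\cdot3^{k-1}$, and let $p:\Psi^k\to\{1,\dots,d\}$ be any bijection. For each group-theoretical relation $(\gamma,\psi)$ of level $k$ define $h_{\gamma,\psi}:\Delta^{d-1}\to\mathbb{R}$ by $$h_{\gamma,\psi}(x)=\sigma\Bigl(\sum_{\psi'\in S(\gamma,\psi)}x_{p(\psi')}\Bigr)\,\sigma\bigl(x_{p(\psi)}\bigr),$$ and let $G^k(x)=\max h_{\gamma,\psi}(x)$, the maximum over all group-theoretical relations $(\gamma,\psi)$ of level $k$. Then $\inf_{x\in\Delta^{d-1}}G^k(x)=12\cdot3^{k-1}-3$.
   Context: $\Gamma$ is the free group on $\xi,\eta$; $|w|$ denotes reduced word length; $\Psi^k$ is the set of reduced words of length exactly $k$ (so $|\Psi^k|=4\cdot3^{k-1}$). $\Delta^{d-1}=\{x\in\mathbb{R}^d: x_i>0,\ \sum_i x_i=1\}$ and $\sigma(t)=(1-t)/t$ for $t\in(0,1)$. A group-theoretical relation of level $k$ is a pair $(\gamma,\psi)$ with $\gamma\in\Gamma\setminus\{1\}$, $|\gamma|\le k$, $\psi\in\Psi^k$, and $|\gamma\psi|\le k$. For such a pair, $S(\gamma,\psi)\subset\Psi^k$ is: if $\gamma\psi=1$, the set of words in $\Psi^k$ whose first letter equals the first letter of the reduced word $\gamma$; if $\gamma\psi\ne1$, the set of words in $\Psi^k$ that do not have the reduced word $\gamma\psi$ as an initial subword. (In all cases $S(\gamma,\psi)$ is a nonempty proper subset of $\Psi^k$, so $h_{\gamma,\psi}$ is well defined.)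 *)

theory Defs
  imports Complex_Main "HOL-Library.Sublist"
begin

text \<open>Free group on two generators xi, eta, realised as reduced words.
  A letter is a generator together with a flag: False = the generator, True = its inverse.\<close>

datatype gen = Xi | Eta

type_synonym letter = "gen \<times> bool"
type_synonym word = "letter list"

definition inv_letter :: "letter \<Rightarrow> letter" where
  "inv_letter a = (fst a, \<not> snd a)"

definition reduced :: "word \<Rightarrow> bool" where
  "reduced w \<longleftrightarrow> (\<forall>i. Suc i < length w \<longrightarrow> w ! Suc i \<noteq> inv_letter (w ! i))"

definition FreeGroup :: "word set" where
  "FreeGroup = {w. reduced w}"

text \<open>Free reduction of (rev ra) @ v, where ra is reduced-reversed and v reduced.\<close>
fun app_red :: "word \<Rightarrow> word \<Rightarrow> word" where
  "app_red [] v = v"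
| "app_red ra [] = rev ra"
| "app_red (a # ra) (b # v) =
     (if b = inv_letter a then app_red ra v else rev (a # ra) @ b # v)"

definition gmult :: "word \<Rightarrow> word \<Rightarrow> word" where
  "gmult u v = app_red (rev u) v"

definition Psi :: "nat \<Rightarrow> word set" where
  "Psi k = {w. reduced w \<and> length w = k}"

definition GTRel :: "nat \<Rightarrow> (word \<times> word) set" where
  "GTRel k = {(\<gamma>, \<psi>). \<gamma> \<in> FreeGroup \<and> \<gamma> \<noteq> [] \<and> length \<gamma> \<le> k \<and> \<psi> \<in> Psi k
                     \<and> length (gmult \<gamma> \<psi>) \<le> k}"

definition Sset :: "nat \<Rightarrow> word \<Rightarrow> word \<Rightarrow> word set" where
  "Sset k \<gamma> \<psi> =
     (if gmult \<gamma> \<psi> = [] then {w \<in> Psi k. hd w = hd \<gamma>}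
      else {w \<in> Psi k. \<not> prefix (gmult \<gamma> \<psi>) w})"

definition simplex :: "nat \<Rightarrow> (nat \<Rightarrow> real) set" where
  "simplex d = {x. (\<forall>i\<in>{1..d}. x i > 0) \<and> (\<Sum>i=1..d. x i) = 1}"

definition sigma :: "real \<Rightarrow> real" where
  "sigma t = (1 - t) / t"

definition hfun :: "nat \<Rightarrow> (word \<Rightarrow> nat) \<Rightarrow> word \<Rightarrow> word \<Rightarrow> (nat \<Rightarrow> real) \<Rightarrow> real" where
  "hfun k p \<gamma> \<psi> x = sigma (\<Sum>\<psi>'\<in>Sset k \<gamma> \<psi>. x (p \<psi>')) * sigma (x (p \<psi>))"

definition Gk :: "nat \<Rightarrow> (word \<Rightarrow> nat) \<Rightarrow> (nat \<Rightarrow> real) \<Rightarrow> real" where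
  "Gk k p x = Max ((\<lambda>(\<gamma>, \<psi>). hfun k p \<gamma> \<psi> x) ` GTRel k)"

end

theory Submission
  imports Defs
begin

definition rinv :: "word \<Rightarrow> word" where "rinv w = rev (map inv_letter w)"
definition Fa :: "nat \<Rightarrow> letter \<Rightarrow> word set" where "Fa k a = {w \<in> Psi k. hd w = a}"

lemma inv_inv[simp]: "inv_letter (inv_letter a) = a"
  by (simp add: inv_letter_def)

lemma inv_inj[simp]: "inv_letter a = inv_letter b \<longleftrightarrow> a = b"
  by (metis inv_inv)

lemma app_red_inv: "app_red (map inv_letter w) w = []"
  by (induction w) auto

lemma gmult_rinv: "gmult (rinv w) w = []"
  by (simp add: gmult_def rinv_def app_red_inv)

lemma length_rinv[simp]: "length (rinv w) = length w"
  by (simp add: rinv_def)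

lemma rinv_rinv[simp]: "rinv (rinv w) = w"
  by (simp add: rinv_def rev_map comp_def)

lemma reduced_rinv: assumes "reduced w" shows "reduced (rinv w)"
  unfolding reduced_def
proof (intro allI impI)
  fix i assume i: "Suc i < length (rinv w)"
  let ?n = "length w"
  have r: "w ! Suc (?n - 2 - i) \<noteq> inv_letter (w ! (?n - 2 - i))"
    using assms i unfolding reduced_def by auto
  have e1: "Suc (?n - 2 - i) = ?n - 1 - i" using i by simp
  have "rinv w ! Suc i = inv_letter (w ! (?n - 2 - i))"
    using i by (simp add: rinv_def rev_nth numeral_2_eq_2)
  moreover have "rinv w ! i = inv_letter (w ! (?n - 1 - i))"
    using i by (simp add: rinv_def rev_nth)
  ultimately show "rinv w ! Suc i \<noteq> inv_letter (rinv w ! i)"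
    using r e1 by (metis inv_inv)
qed

lemma hd_rinv: "w \<noteq> [] \<Longrightarrow> hd (rinv w) = inv_letter (last w)"
  by (simp add: rinv_def hd_rev last_map)

lemma rinv_Psi: "\<psi> \<in> Psi k \<Longrightarrow> rinv \<psi> \<in> Psi k"
  by (simp add: Psi_def reduced_rinv)

lemma rinv_GTRel: "\<psi> \<in> Psi k \<Longrightarrow> k \<ge> 1 \<Longrightarrow> (rinv \<psi>, \<psi>) \<in> GTRel k"
proof -
  assume a: "\<psi> \<in> Psi k" "k \<ge> 1"
  have l: "length (rinv \<psi>) = k" "reduced \<psi>" using a(1) by (simp_all add: Psi_def)
  then have "rinv \<psi> \<noteq> []" using a(2) by (cases "rinv \<psi>") simp_all
  moreover have "reduced (rinv \<psi>)" using l reduced_rinv by blast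
  ultimately show ?thesis using a(1) l(1) unfolding GTRel_def FreeGroup_def
    by (simp add: gmult_rinv)
qed

lemma Sset_rinv: "\<psi> \<in> Psi k \<Longrightarrow> k \<ge> 1 \<Longrightarrow> Sset k (rinv \<psi>) \<psi> = Fa k (inv_letter (last \<psi>))"
proof -
  assume a: "\<psi> \<in> Psi k" "k \<ge> 1"
  then have "\<psi> \<noteq> []" by (auto simp: Psi_def)
  then show ?thesis unfolding Sset_def Fa_def using gmult_rinv[of \<psi>] hd_rinv[of \<psi>]
    by auto
qed

lemma UNIV_letter: "(UNIV :: letter set) = {(Xi,False),(Xi,True),(Eta,False),(Eta,True)}"
  by (auto intro: gen.exhaust)

lemma finite_letter[simp]: "finite (UNIV :: letter set)"
  by (simp add: UNIV_letter)

lemma card_letter: "card (UNIV :: letter set) = 4"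
  by (simp add: UNIV_letter)

lemma finite_Psi: "finite (Psi k)"
proof -
  have "Psi k \<subseteq> {xs. set xs \<subseteq> UNIV \<and> length xs \<le> k}" by (auto simp: Psi_def)
  thus ?thesis using finite_lists_length_le[OF finite_letter] finite_subset by blast
qed

lemma finite_GTRel: "finite (GTRel k)"
proof -
  have "GTRel k \<subseteq> {xs. set xs \<subseteq> UNIV \<and> length xs \<le> k} \<times> Psi k" by (auto simp: GTRel_def)
  thus ?thesis using finite_lists_length_le[OF finite_letter] finite_Psi finite_subset by blast
qed

definition tau :: "letter \<Rightarrow> letter \<Rightarrow> letter \<Rightarrow> letter" where
  "tau a b l = (if fst a = fst b then fst l else (case fst l of Xi \<Rightarrow> Eta | Eta \<Rightarrow> Xi),
                if snd a = snd b then snd l else \<not> snd l)"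

lemma tau_inj: "tau a b l = tau a b l' \<longleftrightarrow> l = l'"
  unfolding tau_def by (cases l; cases l'; auto split: gen.splits)

lemma tau_inv: "tau a b (inv_letter l) = inv_letter (tau a b l)"
  unfolding tau_def inv_letter_def by (cases l; auto split: gen.splits)

lemma tau_ab: "tau a b a = b"
proof -
  obtain g1 b1 where a: "a = (g1,b1)" by force
  obtain g2 b2 where b: "b = (g2,b2)" by force
  show ?thesis unfolding tau_def a b by (cases g1; cases g2; auto)
qed

lemma reduced_map_tau: "reduced w \<Longrightarrow> reduced (map (tau a b) w)"
  unfolding reduced_def by (auto simp: tau_inv[symmetric] tau_inj)

lemma card_Fa_le: "k \<ge> 1 \<Longrightarrow> card (Fa k a) \<le> card (Fa k b)"
proof (rule card_inj_on_le[where f="map (tau a b)"])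
  show "inj_on (map (tau a b)) (Fa k a)"
    by (rule inj_onI) (metis inj_map_eq_map injI tau_inj)
  assume k: "k \<ge> 1"
  show "map (tau a b) ` Fa k a \<subseteq> Fa k b"
  proof
    fix v assume "v \<in> map (tau a b) ` Fa k a"
    then obtain w where w: "w \<in> Fa k a" "v = map (tau a b) w" by auto
    then have "w \<noteq> []" using k by (auto simp: Fa_def Psi_def)
    then show "v \<in> Fa k b" using w by (auto simp: Fa_def Psi_def reduced_map_tau hd_map tau_ab)
  qed
  show "finite (Fa k b)" using finite_Psi by (simp add: Fa_def)
qed

lemma card_Fa_eq: "k \<ge> 1 \<Longrightarrow> card (Fa k a) = card (Fa k b)"
  using card_Fa_le by (meson antisym)

lemma sum_Psi_group: "(\<Sum>w\<in>Psi k. g w) = (\<Sum>a\<in>UNIV. \<Sum>w\<in>Fa k a. g w)"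
  unfolding Fa_def using sum.group[of "Psi k" UNIV hd g] finite_Psi by simp

lemma card_Fa: assumes "k \<ge> 1" shows "4 * card (Fa k a) = card (Psi k)"
proof -
  have "card (Psi k) = (\<Sum>w\<in>Psi k. 1)" by simp
  also have "\<dots> = (\<Sum>b\<in>UNIV. card (Fa k b))" using sum_Psi_group[of "\<lambda>_. 1::nat" k] by simp
  also have "\<dots> = (\<Sum>b\<in>(UNIV::letter set). card (Fa k a))" using card_Fa_eq[OF assms, of _ a] by (intro sum.cong) auto
  also have "\<dots> = 4 * card (Fa k a)" by (simp add: card_letter)
  finally show ?thesis by simp
qed


lemma tangent:
  fixes D t :: real assumes D: "D \<ge> 4" and t: "t > 0"
  shows "(1 - t) / (1 + (3*D-4)*t) \<ge> 1/D - 16*(3*D-3)/(9*D^2) * (t - 1/4)"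
proof -
  define L where "L = 1/D - 16*(3*D-3)/(9*D^2) * (t - 1/4)"
  define den where "den = 1 + (3*D-4)*t"
  have den: "den > 0" using D t unfolding den_def by (simp add: add_pos_nonneg)
  have Dp: "D > 0" using D by simp
  have key: "9*D^2*(1-t) - den*(9*D - 16*(3*D-3)*(t-1/4)) = (3*D-3)*(3*D-4)*(4*t-1)^2"
    unfolding den_def power2_eq_square by algebra
  have e: "9*D^2 * (L*den) = den*(9*D - 16*(3*D-3)*(t-1/4))"
    unfolding L_def using Dp by (simp add: field_simps power2_eq_square)
  have "(3*D-3)*(3*D-4)*(4*t-1)^2 \<ge> 0" using D by simp
  hence "9*D^2 * (L*den) \<le> 9*D^2*(1-t)" using key e by linarith
  hence "L*den \<le> 1-t" using Dp by simp
  hence "L \<le> (1-t)/den" using den by (simp add: le_divide_eq)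
  thus ?thesis unfolding L_def den_def .
qed


lemma step_ineq:
  fixes a y D :: real
  assumes a: "a > 0" and y: "y > 0" and D: "D \<ge> 4" and h: "sigma a * sigma y < 3*(D-1)"
  shows "(1-a)/(1+(3*D-4)*a) < y"
proof -
  have "sigma a * sigma y = ((1-a)*(1-y))/(a*y)" by (simp add: sigma_def)
  with h have "(1-a)*(1-y) < 3*(D-1)*(a*y)" using a y by (simp add: divide_less_eq)
  hence "1-a < y*(1+(3*D-4)*a)" by (simp add: algebra_simps)
  moreover have "1+(3*D-4)*a > 0" using a D by (simp add: add_pos_nonneg)
  ultimately show ?thesis by (simp add: divide_less_eq mult.commute)
qed

lemma lower:
  assumes k: "k \<ge> 1" and bij: "bij_betw p (Psi k) {1..4*3^(k-1)}" and x: "x \<in> simplex (4*3^(k-1))"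
  shows "Gk k p x \<ge> 3*(real (4*3^(k-1)) - 1)"
proof (rule ccontr)
  define d :: nat where "d = 4*3^(k-1)"
  define N :: nat where "N = 3^(k-1)"
  define D :: real where "D = real d"
  have dN: "d = 4*N" unfolding d_def N_def by simp
  have D4: "D \<ge> 4" unfolding D_def dN N_def by simp
  have cardPsi: "card (Psi k) = d" using bij_betw_same_card[OF bij] unfolding d_def by simp
  have cardF: "card (Fa k a) = N" for a using card_Fa[OF k, of a] cardPsi dN by simp
  have Npos: "N > 0" unfolding N_def by simp
  have FPsi: "Fa k a \<subseteq> Psi k" for a by (auto simp: Fa_def)
  have finF: "finite (Fa k a)" for a using FPsi finite_Psi finite_subset by blast
  have pin: "p \<psi> \<in> {1..d}" if "\<psi> \<in> Psi k" for \<psi> using bij that unfolding d_def by (meson bij_betw_apply)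
  have xpos: "x (p \<psi>) > 0" if "\<psi> \<in> Psi k" for \<psi> using x pin[OF that] unfolding simplex_def d_def by auto
  have sum1: "(\<Sum>\<psi>\<in>Psi k. x (p \<psi>)) = 1"
    using sum.reindex_bij_betw[OF bij, of x] x unfolding simplex_def by simp
  define A where "A a = (\<Sum>w\<in>Fa k a. x (p w))" for a
  have Apos: "A a > 0" for a
  proof -
    have "Fa k a \<noteq> {}" using cardF[of a] Npos by auto
    thus ?thesis unfolding A_def using finF FPsi xpos by (metis sum_pos subsetD)
  qed
  have sumA: "(\<Sum>a\<in>UNIV. A a) = 1" unfolding A_def using sum_Psi_group[of "\<lambda>w. x (p w)" k] sum1 by simp
  have nem: "\<psi> \<noteq> []" if "\<psi> \<in> Psi k" for \<psi> using that k by (auto simp: Psi_def)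
  have hb: "sigma (A (inv_letter (last \<psi>))) * sigma (x (p \<psi>)) \<le> Gk k p x" if "\<psi> \<in> Psi k" for \<psi>
  proof -
    have "hfun k p (rinv \<psi>) \<psi> x = sigma (A (inv_letter (last \<psi>))) * sigma (x (p \<psi>))"
      unfolding hfun_def A_def using Sset_rinv[OF that k] by simp
    moreover have "hfun k p (rinv \<psi>) \<psi> x \<in> (\<lambda>(\<gamma>, \<psi>). hfun k p \<gamma> \<psi> x) ` GTRel k"
      by (rule rev_image_eqI[OF rinv_GTRel[OF that k]]) simp
    ultimately show ?thesis unfolding Gk_def using finite_GTRel by (metis Max_ge finite_imageI)
  qed
  define f where "f t = (1-t)/(1+(3*D-4)*t)" for t
  assume "\<not> 3*(real (4*3^(k-1)) - 1) \<le> Gk k p x"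
  hence G: "Gk k p x < 3*(D-1)" unfolding D_def d_def by simp
  have lt: "f (A (inv_letter (last \<psi>))) < x (p \<psi>)" if "\<psi> \<in> Psi k" for \<psi>
    unfolding f_def by (rule step_ineq[OF Apos xpos[OF that] D4]) (use hb[OF that] G in linarith)
  have ne: "Psi k \<noteq> {}" using cardPsi dN Npos by auto
  have "(\<Sum>\<psi>\<in>Psi k. f (A (inv_letter (last \<psi>)))) < (\<Sum>\<psi>\<in>Psi k. x (p \<psi>))"
    by (rule sum_strict_mono[OF finite_Psi ne]) (rule lt)
  hence "(\<Sum>\<psi>\<in>Psi k. f (A (inv_letter (last \<psi>)))) < 1" using sum1 by simp
  moreover have "(\<Sum>\<psi>\<in>Psi k. f (A (inv_letter (last \<psi>)))) = (\<Sum>\<psi>\<in>Psi k. f (A (hd \<psi>)))"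
  proof -
    have bj: "bij_betw rinv (Psi k) (Psi k)"
      by (rule bij_betw_byWitness[where f'=rinv]) (auto simp: rinv_Psi)
    have "(\<Sum>\<psi>\<in>Psi k. f (A (hd (rinv \<psi>)))) = (\<Sum>\<psi>\<in>Psi k. f (A (hd \<psi>)))"
      using sum.reindex_bij_betw[OF bj, of "\<lambda>\<psi>. f (A (hd \<psi>))"] by simp
    moreover have "(\<Sum>\<psi>\<in>Psi k. f (A (hd (rinv \<psi>)))) = (\<Sum>\<psi>\<in>Psi k. f (A (inv_letter (last \<psi>))))"
      using nem hd_rinv by (intro sum.cong) auto
    ultimately show ?thesis by simp
  qed
  moreover have "(\<Sum>\<psi>\<in>Psi k. f (A (hd \<psi>))) = (\<Sum>a\<in>UNIV. real N * f (A a))"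
  proof -
    have "(\<Sum>\<psi>\<in>Psi k. f (A (hd \<psi>))) = (\<Sum>a\<in>UNIV. \<Sum>w\<in>Fa k a. f (A (hd w)))" by (rule sum_Psi_group)
    also have "\<dots> = (\<Sum>a\<in>UNIV. \<Sum>w\<in>Fa k a. f (A a))" by (intro sum.cong) (auto simp: Fa_def)
    also have "\<dots> = (\<Sum>a\<in>UNIV. real N * f (A a))" using cardF by simp
    finally show ?thesis .
  qed
  moreover have "(\<Sum>a\<in>UNIV. real N * f (A a)) \<ge> 1"
  proof -
    define s where "s = 16*(3*D-3)/(9*D^2)"
    have t: "f (A a) \<ge> 1/D - s*(A a - 1/4)" for a
      unfolding f_def s_def using tangent[OF D4 Apos[of a]] by simp
    have "(\<Sum>a\<in>UNIV. real N * f (A a)) \<ge> (\<Sum>a\<in>UNIV. real N * (1/D - s*(A a - 1/4)))"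
      using t Npos by (intro sum_mono) simp
    moreover have "(\<Sum>a\<in>UNIV. real N * (1/D - s*(A a - 1/4))) = real N * (4/D - s * ((\<Sum>a\<in>UNIV. A a) - 1))"
    proof -
      have "(\<Sum>a\<in>UNIV. real N * (1/D - s*(A a - 1/4))) = real N * (\<Sum>a\<in>UNIV. (1/D - s*(A a - 1/4)))"
        by (rule sum_distrib_left[symmetric])
      also have "(\<Sum>a\<in>UNIV. (1/D - s*(A a - 1/4))) = (\<Sum>a\<in>(UNIV::letter set). 1/D) - s * (\<Sum>a\<in>UNIV. (A a - 1/4))"
        by (simp only: sum_subtractf[of "\<lambda>_. 1/D" "\<lambda>a. s*(A a - 1/4)"] sum_distrib_left)
      also have "(\<Sum>a\<in>UNIV. (A a - 1/4)) = (\<Sum>a\<in>UNIV. A a) - 1"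
        by (simp only: sum_subtractf) (simp add: card_letter)
      also have "(\<Sum>a\<in>(UNIV::letter set). 1/D) = 4/D" by (simp add: card_letter)
      finally show ?thesis .
    qed
    moreover have "real N * (4/D) = 1" unfolding D_def dN using Npos by simp
    ultimately show ?thesis using sumA by (metis diff_self mult_zero_right diff_zero)
  qed
  ultimately show False by linarith
qed


lemma upper_h:
  assumes k: "k \<ge> 1" and cardPsi: "card (Psi k) = 4*3^(k-1)" and r: "(\<gamma>, \<psi>) \<in> GTRel k"
  shows "hfun k p \<gamma> \<psi> (\<lambda>i. 1 / real (4*3^(k-1))) \<le> 3*(real (4*3^(k-1)) - 1)"
proof -
  define N :: nat where "N = 3^(k-1)"
  define D :: real where "D = real (4*N)"
  have Npos: "N > 0" unfolding N_def by simp
  have cardF: "card (Fa k a) = N" for a using card_Fa[OF k, of a] cardPsi unfolding N_def by simp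
  define S where "S = Sset k \<gamma> \<psi>"
  have SPsi: "S \<subseteq> Psi k" unfolding S_def Sset_def by auto
  have finS: "finite S" using SPsi finite_Psi finite_subset by blast
  have cS: "card S \<ge> N"
  proof (cases "gmult \<gamma> \<psi> = []")
    case True
    then have "S = Fa k (hd \<gamma>)" unfolding S_def Sset_def Fa_def by simp
    then show ?thesis using cardF by simp
  next
    case False
    define w where "w = gmult \<gamma> \<psi>"
    have wne: "w \<noteq> []" using False unfolding w_def by simp
    have sub: "Psi k - Fa k (hd w) \<subseteq> S"
    proof
      fix v assume v: "v \<in> Psi k - Fa k (hd w)"
      have "\<not> prefix w v"
      proof
        assume "prefix w v"
        then obtain z where "v = w @ z" by (auto simp: prefix_def)
        then have "hd v = hd w" using wne by simp
        then show False using v by (auto simp: Fa_def)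
      qed
      then show "v \<in> S" using v False unfolding S_def Sset_def w_def by auto
    qed
    have "card (Psi k - Fa k (hd w)) = card (Psi k) - N"
      using cardF[of "hd w"] by (simp add: card_Diff_subset Fa_def finite_Psi)
    moreover have "card (Psi k - Fa k (hd w)) \<le> card S" using card_mono[OF finS sub] .
    ultimately show ?thesis using cardPsi unfolding N_def by simp
  qed
  have sPos: "real (card S) > 0" using cS Npos by simp
  have sumS: "(\<Sum>\<psi>'\<in>S. 1 / D) = real (card S) / D" by simp
  have Dpos: "D > 0" unfolding D_def using Npos by simp
  have s1: "sigma (real (card S) / D) \<le> 3"
  proof -
    have "sigma (real (card S) / D) = (D - real (card S)) / real (card S)"
      unfolding sigma_def using Dpos sPos by (simp add: field_simps)
    moreover have "D \<le> 4 * real (card S)" unfolding D_def using cS by simp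
    ultimately show ?thesis using sPos by (simp add: divide_le_eq)
  qed
  have s2: "sigma (1 / D) = D - 1" unfolding sigma_def using Dpos by (simp add: field_simps)
  have D1: "D - 1 \<ge> 0" unfolding D_def using Npos by simp
  have "hfun k p \<gamma> \<psi> (\<lambda>i. 1 / D) = sigma (real (card S) / D) * (D - 1)"
    unfolding hfun_def S_def[symmetric] sumS s2 by simp
  also have "\<dots> \<le> 3 * (D - 1)" using s1 D1 by (rule mult_right_mono)
  finally show ?thesis unfolding D_def N_def by simp
qed

theorem mainTheorem12:
  fixes k :: nat and p :: "word \<Rightarrow> nat"
  assumes "k \<ge> 2"
    and "bij_betw p (Psi k) {1..4 * 3 ^ (k - 1)}"
  shows "(INF x\<in>simplex (4 * 3 ^ (k - 1)). Gk k p x) = 12 * 3 ^ (k - 1) - 3"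
proof -
  have k: "k \<ge> 1" using assms(1) by simp
  define d :: nat where "d = 4 * 3 ^ (k - 1)"
  define u where "u = (\<lambda>i::nat. 1 / real d)"
  have dpos: "d > 0" unfolding d_def by simp
  have cardPsi: "card (Psi k) = d" using bij_betw_same_card[OF assms(2)] unfolding d_def by simp
  have uS: "u \<in> simplex d" unfolding simplex_def u_def using dpos by simp
  have ne: "GTRel k \<noteq> {}"
  proof -
    have "Psi k \<noteq> {}" using cardPsi dpos by auto
    then obtain \<psi> where "\<psi> \<in> Psi k" by blast
    thus ?thesis using rinv_GTRel[OF _ k] by blast
  qed
  have up: "Gk k p u \<le> 3 * (real d - 1)"
    unfolding Gk_def
  proof (rule Max.boundedI)
    show "finite ((\<lambda>(\<gamma>, \<psi>). hfun k p \<gamma> \<psi> u) ` GTRel k)" using finite_GTRel by simp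
    show "(\<lambda>(\<gamma>, \<psi>). hfun k p \<gamma> \<psi> u) ` GTRel k \<noteq> {}" using ne by simp
    fix a assume "a \<in> (\<lambda>(\<gamma>, \<psi>). hfun k p \<gamma> \<psi> u) ` GTRel k"
    then obtain \<gamma> \<psi> where r: "(\<gamma>, \<psi>) \<in> GTRel k" and a: "a = hfun k p \<gamma> \<psi> u" by auto
    show "a \<le> 3 * (real d - 1)"
      using upper_h[OF k cardPsi[unfolded d_def] r, of p] unfolding a u_def d_def by simp
  qed
  have low: "Gk k p x \<ge> 3 * (real d - 1)" if "x \<in> simplex d" for x
    using lower[OF k assms(2)] that unfolding d_def by simp
  have "(INF x\<in>simplex d. Gk k p x) = Gk k p u"
  proof (rule cInf_eq_minimum)
    show "Gk k p u \<in> Gk k p ` simplex d" using uS by blast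
    fix y assume "y \<in> Gk k p ` simplex d"
    then obtain x where "x \<in> simplex d" "y = Gk k p x" by blast
    then show "Gk k p u \<le> y" using up low[of x] by linarith
  qed
  also have "\<dots> = 3 * (real d - 1)" using up low[OF uS] by simp
  also have "\<dots> = 12 * 3 ^ (k - 1) - 3" unfolding d_def by simp
  finally show ?thesis unfolding d_def .
qed

end
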